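(* Let $a>0$ be a constant, $\sigma\in\{1,-1\}$, $J=\mathrm{diag}(1,\sigma)$, and let $\rho_n=\rho_n(s)$ (real-valued) and $q_n=q_n(s)$ (complex-valued), $n\in\mathbb{Z}$, be potentials. For a spectral parameter $\lambda$ consider the linear system $$\Psi_{n+1}=U_n(\rho_n,q_n;\lambda)\Psi_n,\qquad \Psi_{n,s}=V_n(q_n;\lambda)\Psi_n,$$ where $$U_n(\rho_n,q_n;\lambda)=\begin{bmatrix}1-\frac{\mathrm{i}a\rho_n}{\lambda} & -\sigma\frac{q_{n+1}^*-q_n^*}{\lambda}\\[4pt] \frac{q_{n+1}-q_n}{\lambda} & 1+\frac{\mathrm{i}a\rho_n}{\lambda}\end{bmatrix},\qquad V_n(q_n;\lambda)=\frac{\mathrm{i}}{4}\lambda\sigma_3+\frac{\mathrm{i}}{2}\begin{bmatrix}0&\sigma q_n^*\\ q_n&0\end{bmatrix},\qquad \sigma_3=\mathrm{diag}(1,-1).$$ Let $\lambda_1\in\mathbb{C}\setminus\mathbb{R}$ and let $|y_{1,n}\rangle=(\psi_{1,n},\phi_{1,n})^T$ be a solution of this system at $\lambda=\lambda_1$, with $\langle y_{1,n}|J|y_{1,n}\rangle\neq 0$, where $\langle y_{1,n}|=|y_{1,n}\rangle^{\dagger}$ (conjugate transpose). Define the Darboux matrix $$T_n=I+\frac{\lambda_1^*-\lambda_1}{\lambda-\lambda_1^*}P_n,\qquad P_n=\frac{|y_{1,n}\rangle\langle y_{1,n}|J}{\langle y_{1,n}|J|y_{1,n}\rangle}.$$ Then,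 for any solution $\Psi_n$ of the system above, $\Psi_n^{[1]}=T_n\Psi_n$ satisfies $$\Psi_{n+1}^{[1]}=U_n(\rho_n^{[1]},q_n^{[1]};\lambda)\Psi_n^{[1]},\qquad \Psi_{n,s}^{[1]}=V_n(q_n^{[1]};\lambda)\Psi_n^{[1]},$$ where the new potentials are given by the Bäcklund transformation $$\rho_n^{[1]}=\rho_n-\frac{2}{a}\,\partial_s\ln\!\left(\frac{E\big(\langle y_{1,n}|J|y_{1,n}\rangle\big)}{\langle y_{1,n}|J|y_{1,n}\rangle}\right),\qquad q_n^{[1]}=q_n+\frac{(\lambda_1^*-\lambda_1)\psi_{1,n}^*\phi_{1,n}}{\langle y_{1,n}|J|y_{1,n}\rangle},$$ and moreover $$|q_n^{[1]}|^2=|q_n|^2+4\sigma\,\partial_s^2\ln\!\left(\frac{\langle y_{1,n}|J|y_{1,n}\rangle}{\lambda_1^*-\lambda_1}\right).$$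
   Context: $^*$ denotes complex conjugation and $\dagger$ the conjugate transpose. $E$ denotes the shift operator $n\mapsto n+1$, i.e. $E(f_n)=f_{n+1}$. The notation $U_n(\rho_n^{[1]},q_n^{[1]};\lambda)$ means the matrix $U_n$ with $\rho_n,q_n,q_{n+1}$ replaced by $\rho_n^{[1]},q_n^{[1]},q_{n+1}^{[1]}$. This linear system is the Lax pair of the semi-discrete complex coupled dispersionless system (related to the semi-discrete complex short pulse equation via $a\rho_n=x_{n+1}-x_n$). *)

theory Defs
  imports "HOL-Analysis.Analysis"
begin

text \<open>2-component complex vectors are complex^2 (components 1 and 2),
  2x2 complex matrices are complex^2^2 (row-major: M$i$j).\<close>

definition Umat :: "real \<Rightarrow> real \<Rightarrow> real \<Rightarrow> complex \<Rightarrow> complex \<Rightarrow> complex \<Rightarrow> complex^2^2" where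
  "Umat a \<sigma> \<rho>n qn qn1 lam =
     vector [vector [1 - \<i> * of_real (a * \<rho>n) / lam, - of_real \<sigma> * (cnj qn1 - cnj qn) / lam],
             vector [(qn1 - qn) / lam, 1 + \<i> * of_real (a * \<rho>n) / lam]]"

definition Vmat :: "real \<Rightarrow> complex \<Rightarrow> complex \<Rightarrow> complex^2^2" where
  "Vmat \<sigma> qn lam =
     vector [vector [\<i> / 4 * lam, \<i> / 2 * (of_real \<sigma> * cnj qn)],
             vector [\<i> / 2 * qn, - (\<i> / 4 * lam)]]"

definition Jmat :: "real \<Rightarrow> complex^2^2" where
  "Jmat \<sigma> = vector [vector [1, 0], vector [0, of_real \<sigma>]]"

definition braJket :: "real \<Rightarrow> complex^2 \<Rightarrow> complex" where
  "braJket \<sigma> y = (\<Sum>i\<in>UNIV. cnj (y$i) * (Jmat \<sigma> *v y)$i)"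

definition Pmat :: "real \<Rightarrow> complex^2 \<Rightarrow> complex^2^2" where
  "Pmat \<sigma> y = (\<chi> i j. (((\<chi> k l. y$k * cnj (y$l)) ** Jmat \<sigma>) $ i $ j) / braJket \<sigma> y)"

definition Tmat :: "real \<Rightarrow> complex \<Rightarrow> complex^2 \<Rightarrow> complex \<Rightarrow> complex^2^2" where
  "Tmat \<sigma> lam1 y lam =
     (\<chi> i j. (mat 1 :: complex^2^2) $ i $ j + (cnj lam1 - lam1) / (lam - cnj lam1) * Pmat \<sigma> y $ i $ j)"

end

theory Submission
  imports Defs
begin


lemma hvd_vec2:
  fixes F :: "real \<Rightarrow> complex^2"
  assumes "((\<lambda>t. F t $ 1) has_vector_derivative X $ 1) (at s)"
      and "((\<lambda>t. F t $ 2) has_vector_derivative X $ 2) (at s)"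
  shows "(F has_vector_derivative X) (at s)"
proof -
  have c: "((\<lambda>t. F t $ i) has_vector_derivative X $ i) (at s)" for i
    using assms exhaust_2[of i] by auto
  have lim: "((\<lambda>y. ((F y $ i - F s $ i) - (y - s) *\<^sub>R X $ i) /\<^sub>R norm (y - s)) \<longlongrightarrow> 0) (at s)" for i
    using c[of i] unfolding has_vector_derivative_def has_derivative_at_within by simp
  show ?thesis
    unfolding has_vector_derivative_def has_derivative_at_within
  proof
    show "bounded_linear (\<lambda>h. h *\<^sub>R X)" by (rule bounded_linear_scaleR_left)
    show "((\<lambda>y. (F y - F s - (y - s) *\<^sub>R X) /\<^sub>R norm (y - s)) \<longlongrightarrow> 0) (at s)"
      by (rule vec_tendstoI) (use lim in simp)
  qed
qed

lemma hvd_inverse: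
  fixes g :: "real \<Rightarrow> complex"
  assumes "(g has_vector_derivative g') (at s)" "g s \<noteq> 0"
  shows "((\<lambda>t. inverse (g t)) has_vector_derivative (- (inverse (g s) * g' * inverse (g s)))) (at s)"
  using Deriv.has_derivative_inverse[OF assms(2) assms(1)[unfolded has_vector_derivative_def]]
  unfolding has_vector_derivative_def by (simp add: algebra_simps scaleR_conv_of_real)

lemma hvd_divide:
  fixes f g :: "real \<Rightarrow> complex"
  assumes "(f has_vector_derivative f') (at s)" "(g has_vector_derivative g') (at s)" "g s \<noteq> 0"
  shows "((\<lambda>t. f t / g t) has_vector_derivative ((f' * g s - f s * g') / (g s)^2)) (at s)"
proof -
  have "((\<lambda>t. f t * inverse (g t)) has_vector_derivative (f s * (- (inverse (g s) * g' * inverse (g s))) + f' * inverse (g s))) (at s)"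
    by (intro has_vector_derivative_mult assms hvd_inverse)
  moreover have "f s * (- (inverse (g s) * g' * inverse (g s))) + f' * inverse (g s) = (f' * g s - f s * g') / (g s)^2"
    using assms(3) by (simp add: field_simps power2_eq_square)
  ultimately show ?thesis by (simp add: divide_inverse)
qed

lemma hvd_eq: "(f has_vector_derivative X) F \<Longrightarrow> X = Y \<Longrightarrow> (f has_vector_derivative Y) F" by simp

lemma cmod2_deriv:
  fixes z :: "real \<Rightarrow> complex"
  assumes "(z has_vector_derivative dz) (at s)"
  shows "((\<lambda>t. (cmod (z t))^2) has_real_derivative (Re (dz * cnj (z s) + z s * cnj dz))) (at s)"
proof -
  have "((\<lambda>t. z t * cnj (z t)) has_vector_derivative (z s * cnj dz + dz * cnj (z s))) (at s)"
    by (intro has_vector_derivative_mult has_vector_derivative_cnj assms)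
  then have "((\<lambda>t. Re (z t * cnj (z t))) has_vector_derivative Re (z s * cnj dz + dz * cnj (z s))) (at s)"
    by (rule bounded_linear.has_vector_derivative[OF bounded_linear_Re])
  moreover have "Re (z t * cnj (z t)) = (cmod (z t))^2" for t
    using complex_norm_square[of "z t"] by (metis Re_complex_of_real)
  ultimately show ?thesis unfolding has_real_derivative_iff_has_vector_derivative by (simp add: add.commute)
qed

lemma ln_abs_deriv:
  fixes g :: "real \<Rightarrow> real"
  assumes "(g has_real_derivative g') (at s)" "g s \<noteq> 0"
  shows "((\<lambda>t. ln \<bar>g t\<bar>) has_real_derivative g' / g s) (at s)"
proof -
  have eq: "ln \<bar>x\<bar> = ln (x^2) / 2" for x :: real
  proof -
    have "x^2 = \<bar>x\<bar>^2" by simp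
    moreover have "ln (\<bar>x\<bar>^2) = 2 * ln \<bar>x\<bar>" by (simp only: ln_realpow)
    ultimately show ?thesis by simp
  qed
  have d1: "((\<lambda>t. g t * g t) has_real_derivative (g s * g' + g' * g s)) (at s)"
    using DERIV_mult[OF assms(1) assms(1)] by simp
  have pos: "0 < g s * g s" using assms(2) using not_real_square_gt_zero by blast
  have d2: "((\<lambda>t. ln (g t * g t)) has_real_derivative (1 / (g s * g s)) * (g s * g' + g' * g s)) (at s)"
    by (rule DERIV_chain2[OF DERIV_ln_divide[OF pos] d1])
  have d3: "((\<lambda>t. ln (g t * g t) / 2) has_real_derivative (1 / (g s * g s)) * (g s * g' + g' * g s) / 2) (at s)"
    by (rule DERIV_cdivide[OF d2])
  moreover have "(1 / (g s * g s)) * (g s * g' + g' * g s) / 2 = g' / g s"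
    using assms(2) by (simp add: field_simps)
  moreover have "ln (x^2) = ln (x * x)" for x :: real by (simp add: power2_eq_square)
  ultimately show ?thesis unfolding eq by simp
qed



definition Tm :: "complex \<Rightarrow> complex \<Rightarrow> complex \<Rightarrow> complex \<Rightarrow> complex \<Rightarrow> complex \<Rightarrow> complex^2^2" where
 "Tm s c p pc f fc = vector[vector[1 + c * (p * pc) / (p * pc + s * (f * fc)), c * (p * fc * s) / (p * pc + s * (f * fc))],
                            vector[c * (f * pc) / (p * pc + s * (f * fc)), 1 + c * (f * fc * s) / (p * pc + s * (f * fc))]]"

definition Um :: "complex \<Rightarrow> complex \<Rightarrow> complex \<Rightarrow> complex \<Rightarrow> complex \<Rightarrow> complex^2^2" where
 "Um s k d dc l = vector[vector[1 - k / l, - s * dc / l], vector[d / l, 1 + k / l]]"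

lemma m22: "(vector[vector[a11,a12], vector[a21,a22]] :: 'a::comm_ring_1^2^2) ** (vector[vector[b11,b12], vector[b21,b22]] :: 'a^2^2)
  = (vector[vector[a11*b11+a12*b21, a11*b12+a12*b22], vector[a21*b11+a22*b21, a21*b12+a22*b22]] :: 'a^2^2)"
  by (simp add: vec_eq_iff forall_2 matrix_matrix_mult_def sum_2)

lemma v22: "(vector[vector[a11,a12], vector[a21,a22]] :: 'a::comm_ring_1^2^2) = vector[vector[b11,b12], vector[b21,b22]]
  \<longleftrightarrow> a11 = b11 \<and> a12 = b12 \<and> a21 = b21 \<and> a22 = b22"
  by (simp add: vec_eq_iff forall_2)

lemma mv2: "(vector[vector[a11,a12], vector[a21,a22]] :: 'a::comm_ring_1^2^2) *v v = vector[a11 * v$1 + a12 * v$2, a21 * v$1 + a22 * v$2]"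
  by (simp add: vec_eq_iff forall_2 matrix_vector_mult_def sum_2)

lemma vec2_nth: "(vector[x, y] :: 'a::zero^2) $ 1 = x" "(vector[x, y] :: 'a::zero^2) $ 2 = y"
  by simp_all

lemma braJket_eq: "braJket \<sigma> y = y$1 * cnj (y$1) + of_real \<sigma> * (y$2 * cnj (y$2))"
  unfolding braJket_def Jmat_def by (simp add: sum_2 mv2 algebra_simps)

lemma Tmat_eq: "Tmat \<sigma> L y lam = Tm (of_real \<sigma>) ((cnj L - L) / (lam - cnj L)) (y$1) (cnj (y$1)) (y$2) (cnj (y$2))"
  unfolding Tmat_def Tm_def Pmat_def braJket_eq Jmat_def
  by (simp add: vec_eq_iff forall_2 m22 matrix_matrix_mult_def sum_2 mat_def algebra_simps)

lemma Umat_eq: "Umat a \<sigma> r qn qn1 lam = Um (of_real \<sigma>) (\<i> * of_real (a * r)) (qn1 - qn) (cnj qn1 - cnj qn) lam"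
  unfolding Umat_def Um_def by simp

lemma Vmat_eq: "Vmat \<sigma> q lam = vector[vector[\<i> * (lam / 4), \<i> * (of_real \<sigma> * cnj q / 2)], vector[\<i> * (q / 2), \<i> * (- (lam / 4))]]"
  unfolding Vmat_def by simp

lemma Tm_scale:
  assumes "L \<noteq> 0" "Lc \<noteq> 0"
  shows "Tm s c x xc y yc = Tm s c (L * x) (Lc * xc) (L * y) (Lc * yc)"
proof -
  define D where "D = x * xc + s * (y * yc)"
  have e: "(L * x) * (Lc * xc) + s * ((L * y) * (Lc * yc)) = (L * Lc) * D" unfolding D_def by (simp add: algebra_simps)
  have n: "L * Lc \<noteq> 0" using assms by simp
  have g: "u = (L * Lc) * v \<Longrightarrow> v / D = u / ((L * Lc) * D)" for u v using n by simp
  show ?thesis unfolding Tm_def e D_def[symmetric] v22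
    by (intro conjI arg_cong2[where f = plus] refl g) (simp_all add: algebra_simps)
qed

lemma star_lemma:
  fixes p pc f fc P1 P1c F1 F1c d dc k L Lc :: complex
  assumes s: "s = 1 \<or> s = -1"
  and hP1: "P1 = (L - k) * p - s * dc * f" and hF1: "F1 = d * p + (L + k) * f"
  and hP1c: "P1c = (Lc + k) * pc - s * d * fc" and hF1c: "F1c = dc * pc + (Lc - k) * fc"
  and hB: "B = P1 * P1c + s * (F1 * F1c)" and hC: "C = p * pc + s * (f * fc)"
  shows "C * (Lc * P1c + (P1c * (-k) + s * F1c * d))
           - (Lc - L) * (P1c * p + s * F1c * f) * pc - B * pc = 0"
    and "C * (Lc * (s * F1c) + (P1c * (- s * dc) + s * F1c * k))
           - (Lc - L) * (P1c * p + s * F1c * f) * (s * fc) - B * (s * fc) = 0"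
  using s unfolding hB hC hP1 hF1 hP1c hF1c by (auto simp: algebra_simps)

lemma disc_entries:
  fixes p pc f fc P1 P1c F1 F1c d dc k L Lc l s :: complex
  assumes s: "s = 1 \<or> s = -1"
  and hP1: "P1 = (L - k) * p - s * dc * f" and hF1: "F1 = d * p + (L + k) * f"
  and hP1c: "P1c = (Lc + k) * pc - s * d * fc" and hF1c: "F1c = dc * pc + (Lc - k) * fc"
  and hB: "B = P1 * P1c + s * (F1 * F1c)" and hC: "C = p * pc + s * (f * fc)"
  and nz: "l \<noteq> 0" "l - Lc \<noteq> 0" "B \<noteq> 0" "C \<noteq> 0"
  and hc: "c = (Lc - L) / (l - Lc)"
  and hk1: "k1 = k - (Lc - L) * (P1 * P1c / B - p * pc / C)"
  and hD: "D = d + (Lc - L) * (P1c * F1 / B - pc * f / C)"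
  and hDc: "Dc = dc - (Lc - L) * (P1 * F1c / B - p * fc / C)"
  shows "(1 + c * (P1 * P1c) / B) * (1 - k / l) + c * (P1 * F1c * s) / B * (d / l)
           = (1 - k1 / l) * (1 + c * (p * pc) / C) + (- s * Dc / l) * (c * (f * pc) / C)"
    and "(1 + c * (P1 * P1c) / B) * (- s * dc / l) + c * (P1 * F1c * s) / B * (1 + k / l)
           = (1 - k1 / l) * (c * (p * fc * s) / C) + (- s * Dc / l) * (1 + c * (f * fc * s) / C)"
    and "c * (F1 * P1c) / B * (1 - k / l) + (1 + c * (F1 * F1c * s) / B) * (d / l)
           = (D / l) * (1 + c * (p * pc) / C) + (1 + k1 / l) * (c * (f * pc) / C)"
    and "c * (F1 * P1c) / B * (- s * dc / l) + (1 + c * (F1 * F1c * s) / B) * (1 + k / l)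
           = (D / l) * (c * (p * fc * s) / C) + (1 + k1 / l) * (1 + c * (f * fc * s) / C)"
proof -
  have ss: "s * s = 1" using s by auto
  define mu where "mu = Lc - L"
  define a11 where "a11 = p * pc / C"
  define a12 where "a12 = p * fc * s / C"
  define a21 where "a21 = f * pc / C"
  define a22 where "a22 = f * fc * s / C"
  define b11 where "b11 = P1 * P1c / B"
  define b12 where "b12 = P1 * F1c * s / B"
  define b21 where "b21 = F1 * P1c / B"
  define b22 where "b22 = F1 * F1c * s / B"
  define A11 where "A11 = - k"
  define A12 where "A12 = - s * dc"
  define A21 where "A21 = d"
  define A22 where "A22 = k"
  have hmu: "mu = c * (l - Lc)" unfolding hc mu_def using nz(2) by simp
  have a22e: "a22 = 1 - a11" unfolding a22_def a11_def using nz(4) by (simp add: field_simps hC)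
  have b22e: "b22 = 1 - b11" unfolding b22_def b11_def using nz(3) by (simp add: field_simps hB)
  have aa11: "a11 * a11 + a12 * a21 = a11" unfolding a11_def a12_def a21_def using nz(4)
    apply (simp add: field_simps power2_eq_square) unfolding hC using s by (auto simp: algebra_simps)
  have aa12: "a11 * a12 + a12 * a22 = a12" unfolding a11_def a12_def a22_def using nz(4)
    apply (simp add: field_simps power2_eq_square) unfolding hC using s by (auto simp: algebra_simps)
  have aa21: "a21 * a11 + a22 * a21 = a21" unfolding a11_def a22_def a21_def using nz(4)
    apply (simp add: field_simps power2_eq_square) unfolding hC using s by (auto simp: algebra_simps)
  have aa22: "a21 * a12 + a22 * a22 = a22" unfolding a12_def a22_def a21_def using nz(4)
    apply (simp add: field_simps power2_eq_square) unfolding hC using s by (auto simp: algebra_simps)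
  note st = star_lemma[OF s hP1 hF1 hP1c hF1c hB hC]
  have X11: "Lc * (b11 - a11) + (b11 * A11 + b12 * A21) - (A11 * a11 + A12 * a21) - mu * ((b11 * a11 + b12 * a21) - a11) = 0"
  proof -
    have "(Lc * (b11 - a11) + (b11 * A11 + b12 * A21) - (A11 * a11 + A12 * a21) - mu * ((b11 * a11 + b12 * a21) - a11)) * (B * C)
      = P1 * (C * (Lc * P1c + (P1c * (-k) + s * F1c * d))
           - (Lc - L) * (P1c * p + s * F1c * f) * pc - B * pc)"
      using nz unfolding a11_def a12_def a21_def b11_def b12_def b21_def A11_def A12_def A21_def mu_def
      apply (simp add: field_simps) unfolding hP1 hF1 by (simp add: algebra_simps)
    then show ?thesis using st(1) nz by simp
  qed
  have X12: "Lc * (b12 - a12) + (b11 * A12 + b12 * A22) - (A11 * a12 + A12 * a22) - mu * ((b11 * a12 + b12 * a22) - a12) = 0"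
  proof -
    have "(Lc * (b12 - a12) + (b11 * A12 + b12 * A22) - (A11 * a12 + A12 * a22) - mu * ((b11 * a12 + b12 * a22) - a12)) * (B * C)
      = P1 * (C * (Lc * (s * F1c) + (P1c * (- s * dc) + s * F1c * k))
           - (Lc - L) * (P1c * p + s * F1c * f) * (s * fc) - B * (s * fc))"
      using nz unfolding a11_def a12_def a21_def a22_def b11_def b12_def b21_def b22_def A11_def A12_def A21_def A22_def mu_def
      apply (simp add: field_simps) unfolding hP1 hF1 by (simp add: algebra_simps)
    then show ?thesis using st(2) nz by simp
  qed
  have X21: "Lc * (b21 - a21) + (b21 * A11 + b22 * A21) - (A21 * a11 + A22 * a21) - mu * ((b21 * a11 + b22 * a21) - a21) = 0"
  proof -
    have "(Lc * (b21 - a21) + (b21 * A11 + b22 * A21) - (A21 * a11 + A22 * a21) - mu * ((b21 * a11 + b22 * a21) - a21)) * (B * C)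
      = F1 * (C * (Lc * P1c + (P1c * (-k) + s * F1c * d))
           - (Lc - L) * (P1c * p + s * F1c * f) * pc - B * pc)"
      using nz unfolding a11_def a12_def a21_def a22_def b11_def b12_def b21_def b22_def A11_def A12_def A21_def A22_def mu_def
      apply (simp add: field_simps) unfolding hP1 hF1 by (simp add: algebra_simps)
    then show ?thesis using st(1) nz by simp
  qed
  have X22: "Lc * (b22 - a22) + (b21 * A12 + b22 * A22) - (A21 * a12 + A22 * a22) - mu * ((b21 * a12 + b22 * a22) - a22) = 0"
  proof -
    have "(Lc * (b22 - a22) + (b21 * A12 + b22 * A22) - (A21 * a12 + A22 * a22) - mu * ((b21 * a12 + b22 * a22) - a22)) * (B * C)
      = F1 * (C * (Lc * (s * F1c) + (P1c * (- s * dc) + s * F1c * k))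
           - (Lc - L) * (P1c * p + s * F1c * f) * (s * fc) - B * (s * fc))"
      using nz unfolding a11_def a12_def a21_def a22_def b11_def b12_def b21_def b22_def A11_def A12_def A21_def A22_def mu_def
      apply (simp add: field_simps) unfolding hP1 hF1 by (simp add: algebra_simps)
    then show ?thesis using st(2) nz by simp
  qed
  have G11: "(1 + c * b11) * (1 + A11 / l) + (0 + c * b12) * (0 + A21 / l)
     - ((1 + (A11 + mu * (b11 - a11)) / l) * (1 + c * a11) + (0 + (A12 + mu * (b12 - a12)) / l) * (0 + c * a21))
     = c / l * (Lc * (b11 - a11) + (b11 * A11 + b12 * A21) - (A11 * a11 + A12 * a21) - mu * ((b11 * a11 + b12 * a21) - (a11 * a11 + a12 * a21)))"
    unfolding hmu using nz(1) by (simp add: field_simps, (simp add: algebra_simps)?)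
  have G12: "(1 + c * b11) * (0 + A12 / l) + (0 + c * b12) * (1 + A22 / l)
     - ((1 + (A11 + mu * (b11 - a11)) / l) * (0 + c * a12) + (0 + (A12 + mu * (b12 - a12)) / l) * (1 + c * a22))
     = c / l * (Lc * (b12 - a12) + (b11 * A12 + b12 * A22) - (A11 * a12 + A12 * a22) - mu * ((b11 * a12 + b12 * a22) - (a11 * a12 + a12 * a22)))"
    unfolding hmu using nz(1) by (simp add: field_simps, (simp add: algebra_simps)?)
  have G21: "(0 + c * b21) * (1 + A11 / l) + (1 + c * b22) * (0 + A21 / l)
     - ((0 + (A21 + mu * (b21 - a21)) / l) * (1 + c * a11) + (1 + (A22 + mu * (b22 - a22)) / l) * (0 + c * a21))
     = c / l * (Lc * (b21 - a21) + (b21 * A11 + b22 * A21) - (A21 * a11 + A22 * a21) - mu * ((b21 * a11 + b22 * a21) - (a21 * a11 + a22 * a21)))"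
    unfolding hmu using nz(1) by (simp add: field_simps, (simp add: algebra_simps)?)
  have G22: "(0 + c * b21) * (0 + A12 / l) + (1 + c * b22) * (1 + A22 / l)
     - ((0 + (A21 + mu * (b21 - a21)) / l) * (0 + c * a12) + (1 + (A22 + mu * (b22 - a22)) / l) * (1 + c * a22))
     = c / l * (Lc * (b22 - a22) + (b21 * A12 + b22 * A22) - (A21 * a12 + A22 * a22) - mu * ((b21 * a12 + b22 * a22) - (a21 * a12 + a22 * a22)))"
    unfolding hmu using nz(1) by (simp add: field_simps, (simp add: algebra_simps)?)
  have R11: "(1 + c * (P1 * P1c) / B) * (1 - k / l) + c * (P1 * F1c * s) / B * (d / l) = (1 - k1 / l) * (1 + c * (p * pc) / C) + (- s * Dc / l) * (c * (f * pc) / C)"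
  proof -
    have l: "(1 + c * (P1 * P1c) / B) * (1 - k / l) + c * (P1 * F1c * s) / B * (d / l) = (1 + c * b11) * (1 + A11 / l) + (0 + c * b12) * (0 + A21 / l)"
      unfolding a11_def a12_def a21_def a22_def b11_def b12_def b21_def b22_def A11_def A12_def A21_def A22_def
      by (simp add: field_simps)
    have r: "(1 - k1 / l) * (1 + c * (p * pc) / C) + (- s * Dc / l) * (c * (f * pc) / C) = (1 + (A11 + mu * (b11 - a11)) / l) * (1 + c * a11) + (0 + (A12 + mu * (b12 - a12)) / l) * (0 + c * a21)"
      unfolding hk1 hD hDc a11_def a12_def a21_def a22_def b11_def b12_def b21_def b22_def A11_def A12_def A21_def A22_def mu_def
      using nz(1,3,4) by (simp add: field_simps, (unfold hB hC, simp add: algebra_simps)?)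
    have "(1 + c * b11) * (1 + A11 / l) + (0 + c * b12) * (0 + A21 / l) - ((1 + (A11 + mu * (b11 - a11)) / l) * (1 + c * a11) + (0 + (A12 + mu * (b12 - a12)) / l) * (0 + c * a21)) = 0" using G11[unfolded aa11 X11] by simp
    then show ?thesis using l r by simp
  qed
  have R12: "(1 + c * (P1 * P1c) / B) * (- s * dc / l) + c * (P1 * F1c * s) / B * (1 + k / l) = (1 - k1 / l) * (c * (p * fc * s) / C) + (- s * Dc / l) * (1 + c * (f * fc * s) / C)"
  proof -
    have l: "(1 + c * (P1 * P1c) / B) * (- s * dc / l) + c * (P1 * F1c * s) / B * (1 + k / l) = (1 + c * b11) * (0 + A12 / l) + (0 + c * b12) * (1 + A22 / l)"
      unfolding a11_def a12_def a21_def a22_def b11_def b12_def b21_def b22_def A11_def A12_def A21_def A22_def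
      by (simp add: field_simps)
    have r: "(1 - k1 / l) * (c * (p * fc * s) / C) + (- s * Dc / l) * (1 + c * (f * fc * s) / C) = (1 + (A11 + mu * (b11 - a11)) / l) * (0 + c * a12) + (0 + (A12 + mu * (b12 - a12)) / l) * (1 + c * a22)"
      unfolding hk1 hD hDc a11_def a12_def a21_def a22_def b11_def b12_def b21_def b22_def A11_def A12_def A21_def A22_def mu_def
      using nz(1,3,4) by (simp add: field_simps, (unfold hB hC, simp add: algebra_simps)?)
    have "(1 + c * b11) * (0 + A12 / l) + (0 + c * b12) * (1 + A22 / l) - ((1 + (A11 + mu * (b11 - a11)) / l) * (0 + c * a12) + (0 + (A12 + mu * (b12 - a12)) / l) * (1 + c * a22)) = 0" using G12[unfolded aa12 X12] by simp
    then show ?thesis using l r by simp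
  qed
  have R21: "c * (F1 * P1c) / B * (1 - k / l) + (1 + c * (F1 * F1c * s) / B) * (d / l) = (D / l) * (1 + c * (p * pc) / C) + (1 + k1 / l) * (c * (f * pc) / C)"
  proof -
    have l: "c * (F1 * P1c) / B * (1 - k / l) + (1 + c * (F1 * F1c * s) / B) * (d / l) = (0 + c * b21) * (1 + A11 / l) + (1 + c * b22) * (0 + A21 / l)"
      unfolding a11_def a12_def a21_def a22_def b11_def b12_def b21_def b22_def A11_def A12_def A21_def A22_def
      by (simp add: field_simps)
    have r: "(D / l) * (1 + c * (p * pc) / C) + (1 + k1 / l) * (c * (f * pc) / C) = (0 + (A21 + mu * (b21 - a21)) / l) * (1 + c * a11) + (1 + (A22 + mu * (b22 - a22)) / l) * (0 + c * a21)"
      unfolding hk1 hD hDc a11_def a12_def a21_def a22_def b11_def b12_def b21_def b22_def A11_def A12_def A21_def A22_def mu_def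
      using nz(1,3,4) by (simp add: field_simps, (unfold hB hC, simp add: algebra_simps)?)
    have "(0 + c * b21) * (1 + A11 / l) + (1 + c * b22) * (0 + A21 / l) - ((0 + (A21 + mu * (b21 - a21)) / l) * (1 + c * a11) + (1 + (A22 + mu * (b22 - a22)) / l) * (0 + c * a21)) = 0" using G21[unfolded aa21 X21] by simp
    then show ?thesis using l r by simp
  qed
  have R22: "c * (F1 * P1c) / B * (- s * dc / l) + (1 + c * (F1 * F1c * s) / B) * (1 + k / l) = (D / l) * (c * (p * fc * s) / C) + (1 + k1 / l) * (1 + c * (f * fc * s) / C)"
  proof -
    have l: "c * (F1 * P1c) / B * (- s * dc / l) + (1 + c * (F1 * F1c * s) / B) * (1 + k / l) = (0 + c * b21) * (0 + A12 / l) + (1 + c * b22) * (1 + A22 / l)"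
      unfolding a11_def a12_def a21_def a22_def b11_def b12_def b21_def b22_def A11_def A12_def A21_def A22_def
      by (simp add: field_simps)
    have r: "(D / l) * (c * (p * fc * s) / C) + (1 + k1 / l) * (1 + c * (f * fc * s) / C) = (0 + (A21 + mu * (b21 - a21)) / l) * (0 + c * a12) + (1 + (A22 + mu * (b22 - a22)) / l) * (1 + c * a22)"
      unfolding hk1 hD hDc a11_def a12_def a21_def a22_def b11_def b12_def b21_def b22_def A11_def A12_def A21_def A22_def mu_def
      using nz(1,3,4) by (simp add: field_simps, (unfold hB hC, simp add: algebra_simps)?)
    have "(0 + c * b21) * (0 + A12 / l) + (1 + c * b22) * (1 + A22 / l) - ((0 + (A21 + mu * (b21 - a21)) / l) * (0 + c * a12) + (1 + (A22 + mu * (b22 - a22)) / l) * (1 + c * a22)) = 0" using G22[unfolded aa22 X22] by simp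
    then show ?thesis using l r by simp
  qed
  show "(1 + c * (P1 * P1c) / B) * (1 - k / l) + c * (P1 * F1c * s) / B * (d / l) = (1 - k1 / l) * (1 + c * (p * pc) / C) + (- s * Dc / l) * (c * (f * pc) / C)" by (rule R11)
  show "(1 + c * (P1 * P1c) / B) * (- s * dc / l) + c * (P1 * F1c * s) / B * (1 + k / l) = (1 - k1 / l) * (c * (p * fc * s) / C) + (- s * Dc / l) * (1 + c * (f * fc * s) / C)" by (rule R12)
  show "c * (F1 * P1c) / B * (1 - k / l) + (1 + c * (F1 * F1c * s) / B) * (d / l) = (D / l) * (1 + c * (p * pc) / C) + (1 + k1 / l) * (c * (f * pc) / C)" by (rule R21)
  show "c * (F1 * P1c) / B * (- s * dc / l) + (1 + c * (F1 * F1c * s) / B) * (1 + k / l) = (D / l) * (c * (p * fc * s) / C) + (1 + k1 / l) * (1 + c * (f * fc * s) / C)" by (rule R22)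
qed


lemma V_entries_p:
  fixes p pc f fc q qc L Lc l s c C Dp Df Dpc Dfc Cd Q Qc :: complex
  assumes s: "s = 1"
  and hC: "C = p * pc + s * (f * fc)" and nz: "C \<noteq> 0"
  and hDp: "Dp = L / 4 * p + s * qc / 2 * f" and hDf: "Df = q / 2 * p - L / 4 * f"
  and hDpc: "Dpc = - (Lc / 4 * pc + s * q / 2 * fc)" and hDfc: "Dfc = - (qc / 2 * pc - Lc / 4 * fc)"
  and hCd: "Cd = Dp * pc + p * Dpc + s * (Df * fc + f * Dfc)"
  and hc: "c * (l - Lc) = Lc - L"
  and hQ: "Q = q + (Lc - L) * pc * f / C" and hQc: "Qc = qc - (Lc - L) * p * fc / C"
  shows
    "c * (((Dp * pc + p * Dpc) * C - (p * pc) * Cd) / C^2) + ((1 + c * (p * pc) / C) * (l / 4) + (c * (p * fc * s) / C) * (q / 2)) = (l / 4) * (1 + c * (p * pc) / C) + (s * Qc / 2) * (c * (f * pc) / C)"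
    and "c * ((((Dp * fc + p * Dfc) * s) * C - (p * fc * s) * Cd) / C^2) + ((1 + c * (p * pc) / C) * (s * qc / 2) + (c * (p * fc * s) / C) * (- (l / 4))) = (l / 4) * (c * (p * fc * s) / C) + (s * Qc / 2) * (1 + c * (f * fc * s) / C)"
    and "c * (((Df * pc + f * Dpc) * C - (f * pc) * Cd) / C^2) + ((c * (f * pc) / C) * (l / 4) + (1 + c * (f * fc * s) / C) * (q / 2)) = (Q / 2) * (1 + c * (p * pc) / C) + (- (l / 4)) * (c * (f * pc) / C)"
    and "c * ((((Df * fc + f * Dfc) * s) * C - (f * fc * s) * Cd) / C^2) + ((c * (f * pc) / C) * (s * qc / 2) + (1 + c * (f * fc * s) / C) * (- (l / 4))) = (Q / 2) * (c * (p * fc * s) / C) + (- (l / 4)) * (1 + c * (f * fc * s) / C)"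
proof -
  have hL: "L = Lc - c * (l - Lc)" using hc by (simp add: algebra_simps)
  show "c * (((Dp * pc + p * Dpc) * C - (p * pc) * Cd) / C^2) + ((1 + c * (p * pc) / C) * (l / 4) + (c * (p * fc * s) / C) * (q / 2)) = (l / 4) * (1 + c * (p * pc) / C) + (s * Qc / 2) * (c * (f * pc) / C)"
    unfolding hQ hQc hCd hDp hDf hDpc hDfc hL using nz apply (simp add: field_simps power2_eq_square)
    unfolding hC s by ((simp add: algebra_simps; fail) | (subst eq_iff_diff_eq_0, simp add: algebra_simps; fail) | algebra)
  show "c * ((((Dp * fc + p * Dfc) * s) * C - (p * fc * s) * Cd) / C^2) + ((1 + c * (p * pc) / C) * (s * qc / 2) + (c * (p * fc * s) / C) * (- (l / 4))) = (l / 4) * (c * (p * fc * s) / C) + (s * Qc / 2) * (1 + c * (f * fc * s) / C)"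
    unfolding hQ hQc hCd hDp hDf hDpc hDfc hL using nz apply (simp add: field_simps power2_eq_square)
    unfolding hC s by ((simp add: algebra_simps; fail) | (subst eq_iff_diff_eq_0, simp add: algebra_simps; fail) | algebra)
  show "c * (((Df * pc + f * Dpc) * C - (f * pc) * Cd) / C^2) + ((c * (f * pc) / C) * (l / 4) + (1 + c * (f * fc * s) / C) * (q / 2)) = (Q / 2) * (1 + c * (p * pc) / C) + (- (l / 4)) * (c * (f * pc) / C)"
    unfolding hQ hQc hCd hDp hDf hDpc hDfc hL using nz apply (simp add: field_simps power2_eq_square)
    unfolding hC s by ((simp add: algebra_simps; fail) | (subst eq_iff_diff_eq_0, simp add: algebra_simps; fail) | algebra)
  show "c * ((((Df * fc + f * Dfc) * s) * C - (f * fc * s) * Cd) / C^2) + ((c * (f * pc) / C) * (s * qc / 2) + (1 + c * (f * fc * s) / C) * (- (l / 4))) = (Q / 2) * (c * (p * fc * s) / C) + (- (l / 4)) * (1 + c * (f * fc * s) / C)"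
    unfolding hQ hQc hCd hDp hDf hDpc hDfc hL using nz apply (simp add: field_simps power2_eq_square)
    unfolding hC s by ((simp add: algebra_simps; fail) | (subst eq_iff_diff_eq_0, simp add: algebra_simps; fail) | algebra)
qed



lemma V_entries_m:
  fixes p pc f fc q qc L Lc l s c C Dp Df Dpc Dfc Cd Q Qc :: complex
  assumes s: "s = -1"
  and hC: "C = p * pc + s * (f * fc)" and nz: "C \<noteq> 0"
  and hDp: "Dp = L / 4 * p + s * qc / 2 * f" and hDf: "Df = q / 2 * p - L / 4 * f"
  and hDpc: "Dpc = - (Lc / 4 * pc + s * q / 2 * fc)" and hDfc: "Dfc = - (qc / 2 * pc - Lc / 4 * fc)"
  and hCd: "Cd = Dp * pc + p * Dpc + s * (Df * fc + f * Dfc)"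
  and hc: "c * (l - Lc) = Lc - L"
  and hQ: "Q = q + (Lc - L) * pc * f / C" and hQc: "Qc = qc - (Lc - L) * p * fc / C"
  shows
    "c * (((Dp * pc + p * Dpc) * C - (p * pc) * Cd) / C^2) + ((1 + c * (p * pc) / C) * (l / 4) + (c * (p * fc * s) / C) * (q / 2)) = (l / 4) * (1 + c * (p * pc) / C) + (s * Qc / 2) * (c * (f * pc) / C)"
    and "c * ((((Dp * fc + p * Dfc) * s) * C - (p * fc * s) * Cd) / C^2) + ((1 + c * (p * pc) / C) * (s * qc / 2) + (c * (p * fc * s) / C) * (- (l / 4))) = (l / 4) * (c * (p * fc * s) / C) + (s * Qc / 2) * (1 + c * (f * fc * s) / C)"
    and "c * (((Df * pc + f * Dpc) * C - (f * pc) * Cd) / C^2) + ((c * (f * pc) / C) * (l / 4) + (1 + c * (f * fc * s) / C) * (q / 2)) = (Q / 2) * (1 + c * (p * pc) / C) + (- (l / 4)) * (c * (f * pc) / C)"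
    and "c * ((((Df * fc + f * Dfc) * s) * C - (f * fc * s) * Cd) / C^2) + ((c * (f * pc) / C) * (s * qc / 2) + (1 + c * (f * fc * s) / C) * (- (l / 4))) = (Q / 2) * (c * (p * fc * s) / C) + (- (l / 4)) * (1 + c * (f * fc * s) / C)"
proof -
  have hL: "L = Lc - c * (l - Lc)" using hc by (simp add: algebra_simps)
  show "c * (((Dp * pc + p * Dpc) * C - (p * pc) * Cd) / C^2) + ((1 + c * (p * pc) / C) * (l / 4) + (c * (p * fc * s) / C) * (q / 2)) = (l / 4) * (1 + c * (p * pc) / C) + (s * Qc / 2) * (c * (f * pc) / C)"
    unfolding hQ hQc hCd hDp hDf hDpc hDfc hL using nz apply (simp add: field_simps power2_eq_square)
    unfolding hC s by ((simp add: algebra_simps; fail) | (subst eq_iff_diff_eq_0, simp add: algebra_simps; fail) | algebra)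
  show "c * ((((Dp * fc + p * Dfc) * s) * C - (p * fc * s) * Cd) / C^2) + ((1 + c * (p * pc) / C) * (s * qc / 2) + (c * (p * fc * s) / C) * (- (l / 4))) = (l / 4) * (c * (p * fc * s) / C) + (s * Qc / 2) * (1 + c * (f * fc * s) / C)"
    unfolding hQ hQc hCd hDp hDf hDpc hDfc hL using nz apply (simp add: field_simps power2_eq_square)
    unfolding hC s by ((simp add: algebra_simps; fail) | (subst eq_iff_diff_eq_0, simp add: algebra_simps; fail) | algebra)
  show "c * (((Df * pc + f * Dpc) * C - (f * pc) * Cd) / C^2) + ((c * (f * pc) / C) * (l / 4) + (1 + c * (f * fc * s) / C) * (q / 2)) = (Q / 2) * (1 + c * (p * pc) / C) + (- (l / 4)) * (c * (f * pc) / C)"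
    unfolding hQ hQc hCd hDp hDf hDpc hDfc hL using nz apply (simp add: field_simps power2_eq_square)
    unfolding hC s by ((simp add: algebra_simps; fail) | (subst eq_iff_diff_eq_0, simp add: algebra_simps; fail) | algebra)
  show "c * ((((Df * fc + f * Dfc) * s) * C - (f * fc * s) * Cd) / C^2) + ((c * (f * pc) / C) * (s * qc / 2) + (1 + c * (f * fc * s) / C) * (- (l / 4))) = (Q / 2) * (c * (p * fc * s) / C) + (- (l / 4)) * (1 + c * (f * fc * s) / C)"
    unfolding hQ hQc hCd hDp hDf hDpc hDfc hL using nz apply (simp add: field_simps power2_eq_square)
    unfolding hC s by ((simp add: algebra_simps; fail) | (subst eq_iff_diff_eq_0, simp add: algebra_simps; fail) | algebra)
qed


lemma C_alg_p:
  fixes p pc f fc q qc L Lc s C Q Qc Bdd Bd2 X Y :: complex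
  assumes s: "s = 1" and hC: "C = p * pc + s * (f * fc)" and nz: "C \<noteq> 0"
  and hX: "X = (L / 4 * p + s * qc / 2 * f) * pc - p * (Lc / 4 * pc + s * q / 2 * fc)"
  and hY: "Y = (q / 2 * p - L / 4 * f) * fc - f * (qc / 2 * pc - Lc / 4 * fc)"
  and hBdd: "Bdd = (L - Lc) / 4 * (s * Y - X)"
  and hBd2: "Bd2 = - ((L - Lc)^2 / 16 * (s * (f * fc) - p * pc)^2)"
  and hQ: "Q = q + (Lc - L) * pc * f / C" and hQc: "Qc = qc - (Lc - L) * p * fc / C"
  shows "Q * Qc = q * qc + 4 * s * ((Bdd * C - Bd2) / (C * C))"
  unfolding hQ hQc hBdd hBd2 hX hY using nz apply (simp add: field_simps power2_eq_square)
  unfolding hC s by ((simp add: algebra_simps; fail) | (subst eq_iff_diff_eq_0, simp add: algebra_simps; fail) | algebra)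

lemma C_alg_m:
  fixes p pc f fc q qc L Lc s C Q Qc Bdd Bd2 X Y :: complex
  assumes s: "s = -1" and hC: "C = p * pc + s * (f * fc)" and nz: "C \<noteq> 0"
  and hX: "X = (L / 4 * p + s * qc / 2 * f) * pc - p * (Lc / 4 * pc + s * q / 2 * fc)"
  and hY: "Y = (q / 2 * p - L / 4 * f) * fc - f * (qc / 2 * pc - Lc / 4 * fc)"
  and hBdd: "Bdd = (L - Lc) / 4 * (s * Y - X)"
  and hBd2: "Bd2 = - ((L - Lc)^2 / 16 * (s * (f * fc) - p * pc)^2)"
  and hQ: "Q = q + (Lc - L) * pc * f / C" and hQc: "Qc = qc - (Lc - L) * p * fc / C"
  shows "Q * Qc = q * qc + 4 * s * ((Bdd * C - Bd2) / (C * C))"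
  unfolding hQ hQc hBdd hBd2 hX hY using nz apply (simp add: field_simps power2_eq_square)
  unfolding hC s by ((simp add: algebra_simps; fail) | (subst eq_iff_diff_eq_0, simp add: algebra_simps; fail) | algebra)

lemma C_alg:
  fixes p pc f fc q qc L Lc s C Q Qc Bdd Bd2 X Y :: complex
  assumes s: "s = 1 \<or> s = -1" and hC: "C = p * pc + s * (f * fc)" and nz: "C \<noteq> 0"
  and hX: "X = (L / 4 * p + s * qc / 2 * f) * pc - p * (Lc / 4 * pc + s * q / 2 * fc)"
  and hY: "Y = (q / 2 * p - L / 4 * f) * fc - f * (qc / 2 * pc - Lc / 4 * fc)"
  and hBdd: "Bdd = (L - Lc) / 4 * (s * Y - X)"
  and hBd2: "Bd2 = - ((L - Lc)^2 / 16 * (s * (f * fc) - p * pc)^2)"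
  and hQ: "Q = q + (Lc - L) * pc * f / C" and hQc: "Qc = qc - (Lc - L) * p * fc / C"
  shows "Q * Qc = q * qc + 4 * s * ((Bdd * C - Bd2) / (C * C))"
  using s C_alg_p[OF _ hC nz hX hY hBdd hBd2 hQ hQc] C_alg_m[OF _ hC nz hX hY hBdd hBd2 hQ hQc] by blast

lemma disc_mat:
  fixes p pc f fc P1 P1c F1 F1c d dc k L Lc l s :: complex
  assumes s: "s = 1 \<or> s = -1"
  and hP1: "P1 = (L - k) * p - s * dc * f" and hF1: "F1 = d * p + (L + k) * f"
  and hP1c: "P1c = (Lc + k) * pc - s * d * fc" and hF1c: "F1c = dc * pc + (Lc - k) * fc"
  and nz: "l \<noteq> 0" "l - Lc \<noteq> 0" "P1 * P1c + s * (F1 * F1c) \<noteq> 0" "p * pc + s * (f * fc) \<noteq> 0"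
  shows "Tm s ((Lc - L) / (l - Lc)) P1 P1c F1 F1c ** Um s k d dc l =
     Um s (k - (Lc - L) * (P1 * P1c / (P1 * P1c + s * (F1 * F1c)) - p * pc / (p * pc + s * (f * fc))))
       (d + (Lc - L) * (P1c * F1 / (P1 * P1c + s * (F1 * F1c)) - pc * f / (p * pc + s * (f * fc))))
       (dc - (Lc - L) * (P1 * F1c / (P1 * P1c + s * (F1 * F1c)) - p * fc / (p * pc + s * (f * fc)))) l
     ** Tm s ((Lc - L) / (l - Lc)) p pc f fc"
  unfolding Tm_def Um_def m22 v22
  using disc_entries[OF s hP1 hF1 hP1c hF1c refl refl nz refl refl refl refl] by simp

lemma combine:
  fixes y1 y2 x1 x2 w11 w12 w21 w22 D1 D2 a1 a2 z1 z2 t11 t12 t21 t22 :: complex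
  assumes "y1 = \<i> * w11 * x1 + \<i> * w12 * x2" "y2 = \<i> * w21 * x1 + \<i> * w22 * x2"
   and E1: "D1 + (a1 * w11 + a2 * w21) = z1 * t11 + z2 * t21"
   and E2: "D2 + (a1 * w12 + a2 * w22) = z1 * t12 + z2 * t22"
  shows "a1 * y1 + (\<i> * D1) * x1 + (a2 * y2 + (\<i> * D2) * x2) = (\<i> * z1) * (t11 * x1 + t12 * x2) + (\<i> * z2) * (t21 * x1 + t22 * x2)"
proof -
  have "a1 * y1 + (\<i> * D1) * x1 + (a2 * y2 + (\<i> * D2) * x2) = \<i> * (x1 * (D1 + (a1 * w11 + a2 * w21)) + x2 * (D2 + (a1 * w12 + a2 * w22)))"
    unfolding assms(1,2) by (simp add: algebra_simps)
  also have "\<dots> = (\<i> * z1) * (t11 * x1 + t12 * x2) + (\<i> * z2) * (t21 * x1 + t22 * x2)"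
    unfolding E1 E2 by (simp add: algebra_simps)
  finally show ?thesis .
qed

lemma V_entries:
  fixes p pc f fc q qc L Lc l s c C Dp Df Dpc Dfc Cd Q Qc :: complex
  assumes s: "s = 1 \<or> s = -1"
  and hC: "C = p * pc + s * (f * fc)" and nz: "C \<noteq> 0"
  and hDp: "Dp = L / 4 * p + s * qc / 2 * f" and hDf: "Df = q / 2 * p - L / 4 * f"
  and hDpc: "Dpc = - (Lc / 4 * pc + s * q / 2 * fc)" and hDfc: "Dfc = - (qc / 2 * pc - Lc / 4 * fc)"
  and hCd: "Cd = Dp * pc + p * Dpc + s * (Df * fc + f * Dfc)"
  and hc: "c * (l - Lc) = Lc - L"
  and hQ: "Q = q + (Lc - L) * pc * f / C" and hQc: "Qc = qc - (Lc - L) * p * fc / C"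
  shows

    "c * (((Dp * pc + p * Dpc) * C - (p * pc) * Cd) / C^2) + ((1 + c * (p * pc) / C) * (l / 4) + (c * (p * fc * s) / C) * (q / 2)) = (l / 4) * (1 + c * (p * pc) / C) + (s * Qc / 2) * (c * (f * pc) / C)"
    and "c * ((((Dp * fc + p * Dfc) * s) * C - (p * fc * s) * Cd) / C^2) + ((1 + c * (p * pc) / C) * (s * qc / 2) + (c * (p * fc * s) / C) * (- (l / 4))) = (l / 4) * (c * (p * fc * s) / C) + (s * Qc / 2) * (1 + c * (f * fc * s) / C)"
    and "c * (((Df * pc + f * Dpc) * C - (f * pc) * Cd) / C^2) + ((c * (f * pc) / C) * (l / 4) + (1 + c * (f * fc * s) / C) * (q / 2)) = (Q / 2) * (1 + c * (p * pc) / C) + (- (l / 4)) * (c * (f * pc) / C)"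
    and "c * ((((Df * fc + f * Dfc) * s) * C - (f * fc * s) * Cd) / C^2) + ((c * (f * pc) / C) * (s * qc / 2) + (1 + c * (f * fc * s) / C) * (- (l / 4))) = (Q / 2) * (c * (p * fc * s) / C) + (- (l / 4)) * (1 + c * (f * fc * s) / C)"
  using s V_entries_p[OF _ hC nz hDp hDf hDpc hDfc hCd hc hQ hQc] V_entries_m[OF _ hC nz hDp hDf hDpc hDfc hCd hc hQ hQc] by blast+

lemma ent_der_e:
  fixes u v w :: "real \<Rightarrow> complex"
  assumes "(u has_vector_derivative \<i> * Du) (at t)" "(v has_vector_derivative \<i> * Dv) (at t)"
    "(w has_vector_derivative \<i> * Dw) (at t)" "w t \<noteq> 0"
  shows "((\<lambda>t. c * (u t * v t * e) / w t) has_vector_derivative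
     \<i> * (c * ((((Du * v t + u t * Dv) * e) * w t - (u t * v t * e) * Dw) / (w t)^2))) (at t)"
proof -
  have "((\<lambda>t. c * (u t * v t * e)) has_vector_derivative c * ((u t * (\<i> * Dv) + (\<i> * Du) * v t) * e)) (at t)"
    by (intro has_vector_derivative_mult_right has_vector_derivative_mult_left has_vector_derivative_mult assms)
  from hvd_divide[OF this assms(3,4)] show ?thesis
    by (rule hvd_eq) (simp add: algebra_simps)
qed

lemma ent_der:
  fixes u v w :: "real \<Rightarrow> complex"
  assumes "(u has_vector_derivative \<i> * Du) (at t)" "(v has_vector_derivative \<i> * Dv) (at t)"
    "(w has_vector_derivative \<i> * Dw) (at t)" "w t \<noteq> 0"
  shows "((\<lambda>t. c * (u t * v t) / w t) has_vector_derivative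
     \<i> * (c * (((Du * v t + u t * Dv) * w t - (u t * v t) * Dw) / (w t)^2))) (at t)"
  using ent_der_e[OF assms, of c 1] by simp

lemma hvd_one_plus: "(f has_vector_derivative X) (at t) \<Longrightarrow> ((\<lambda>t. 1 + f t) has_vector_derivative X) (at t)"
  for f :: "real \<Rightarrow> complex"
proof -
  assume "(f has_vector_derivative X) (at t)"
  then have "((\<lambda>t. 1 + f t) has_vector_derivative (0 + X)) (at t)"
    by (intro has_vector_derivative_add has_vector_derivative_const)
  then show ?thesis by simp
qed



lemma iBd:
  fixes y :: "complex^2" and \<sigma> :: real and L sg :: complex
  assumes sg: "sg = complex_of_real \<sigma>" and nz: "(cmod (y$1))^2 + \<sigma> * (cmod (y$2))^2 \<noteq> 0"
  shows "\<i> * complex_of_real (2 * ((Im L / 2 * (\<sigma> * (cmod (y$2))^2 - (cmod (y$1))^2)) / ((cmod (y$1))^2 + \<sigma> * (cmod (y$2))^2)))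
     = - (cnj L - L) / 2 + (cnj L - L) * (y$1 * cnj (y$1)) / (y$1 * cnj (y$1) + sg * (y$2 * cnj (y$2)))"
proof -
  define A where "A = (cmod (y$1))^2"
  define B where "B = (cmod (y$2))^2"
  have a: "y$1 * cnj (y$1) = of_real A" unfolding A_def by (rule complex_norm_square[symmetric])
  have b: "y$2 * cnj (y$2) = of_real B" unfolding B_def by (rule complex_norm_square[symmetric])
  have ImL: "complex_of_real (Im L) = - (\<i> / 2) * (L - cnj L)" by (simp add: complex_eq_iff)
  have nz': "complex_of_real A + complex_of_real \<sigma> * complex_of_real B \<noteq> 0"
    using nz unfolding A_def B_def by (metis of_real_add of_real_eq_0_iff of_real_mult)
  have "\<i> * complex_of_real (2 * ((Im L / 2 * (\<sigma> * B - A)) / (A + \<sigma> * B)))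
      = (\<i> * complex_of_real (Im L)) * complex_of_real ((\<sigma> * B - A) / (A + \<sigma> * B))"
  proof -
    have "2 * ((Im L / 2 * (\<sigma> * B - A)) / (A + \<sigma> * B)) = Im L * ((\<sigma> * B - A) / (A + \<sigma> * B))"
      using nz unfolding A_def[symmetric] B_def[symmetric] by (simp add: field_simps)
    then show ?thesis by (simp only: of_real_mult mult.assoc)
  qed
  also have "\<i> * complex_of_real (Im L) = (L - cnj L) / 2" unfolding ImL by (simp add: field_simps)
  also have "complex_of_real ((\<sigma> * B - A) / (A + \<sigma> * B)) = (complex_of_real \<sigma> * complex_of_real B - complex_of_real A) / (complex_of_real A + complex_of_real \<sigma> * complex_of_real B)"
    by simp
  also have "(L - cnj L) / 2 * ((complex_of_real \<sigma> * complex_of_real B - complex_of_real A) / (complex_of_real A + complex_of_real \<sigma> * complex_of_real B))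
     = - (cnj L - L) / 2 + (cnj L - L) * complex_of_real A / (complex_of_real A + complex_of_real \<sigma> * complex_of_real B)"
    using nz' by (simp add: field_simps)
  finally show ?thesis unfolding a b sg A_def[symmetric] B_def[symmetric] .
qed

theorem proposition1:
  fixes a \<sigma> :: real and \<rho> :: "int \<Rightarrow> real \<Rightarrow> real" and q :: "int \<Rightarrow> real \<Rightarrow> complex"
    and lam1 :: complex and y1 :: "int \<Rightarrow> real \<Rightarrow> complex^2"
    and \<rho>1 :: "int \<Rightarrow> real \<Rightarrow> real" and q1 :: "int \<Rightarrow> real \<Rightarrow> complex"
  assumes a_pos: "a > 0"
    and sigma: "\<sigma> = 1 \<or> \<sigma> = -1"
    and lam1: "Im lam1 \<noteq> 0"
    and y1_U: "\<And>n s. y1 (n + 1) s = Umat a \<sigma> (\<rho> n s) (q n s) (q (n + 1) s) lam1 *v y1 n s"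
    and y1_V: "\<And>n s. (y1 n has_vector_derivative (Vmat \<sigma> (q n s) lam1 *v y1 n s)) (at s)"
    and nz: "\<And>n s. braJket \<sigma> (y1 n s) \<noteq> 0"
    and rho1_def: "\<And>n s. \<rho>1 n s = \<rho> n s - 2 / a *
        deriv (\<lambda>t. ln \<bar>Re (braJket \<sigma> (y1 (n + 1) t)) / Re (braJket \<sigma> (y1 n t))\<bar>) s"
    and q1_def: "\<And>n s. q1 n s = q n s +
        (cnj lam1 - lam1) * cnj (y1 n s $ 1) * (y1 n s $ 2) / braJket \<sigma> (y1 n s)"
  shows "(\<forall>(lam::complex) (\<Psi>::int \<Rightarrow> real \<Rightarrow> complex^2).
            lam \<noteq> 0 \<and> lam \<noteq> cnj lam1
            \<and> (\<forall>n s. \<Psi> (n + 1) s = Umat a \<sigma> (\<rho> n s) (q n s) (q (n + 1) s) lam *v \<Psi> n s)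
            \<and> (\<forall>n s. (\<Psi> n has_vector_derivative (Vmat \<sigma> (q n s) lam *v \<Psi> n s)) (at s))
          \<longrightarrow> (\<forall>n s.
                Tmat \<sigma> lam1 (y1 (n + 1) s) lam *v \<Psi> (n + 1) s
                  = Umat a \<sigma> (\<rho>1 n s) (q1 n s) (q1 (n + 1) s) lam *v (Tmat \<sigma> lam1 (y1 n s) lam *v \<Psi> n s)
              \<and> ((\<lambda>t. Tmat \<sigma> lam1 (y1 n t) lam *v \<Psi> n t) has_vector_derivative
                   (Vmat \<sigma> (q1 n s) lam *v (Tmat \<sigma> lam1 (y1 n s) lam *v \<Psi> n s))) (at s)))
       \<and> (\<forall>n s. (cmod (q1 n s))\<^sup>2 = (cmod (q n s))\<^sup>2 +
            4 * \<sigma> * deriv (deriv (\<lambda>t. ln (cmod (braJket \<sigma> (y1 n t) / (cnj lam1 - lam1))))) s)"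
proof -
  define sg where "sg = complex_of_real \<sigma>"
  have sgv: "sg = 1 \<or> sg = -1" using sigma unfolding sg_def by auto
  have sgc: "cnj sg = sg" unfolding sg_def by simp
  have L0: "lam1 \<noteq> 0" using lam1 by auto
  have Lc0: "cnj lam1 \<noteq> 0" using lam1 by (auto simp: complex_eq_iff)
  have LLc: "cnj lam1 - lam1 \<noteq> 0" using lam1 by (auto simp: complex_eq_iff)
  have ImL: "complex_of_real (Im lam1) = - (\<i> / 2) * (lam1 - cnj lam1)" by (simp add: complex_eq_iff)
  have dpsi: "((\<lambda>t. y1 n t $ 1) has_vector_derivative
      \<i> * (lam1 / 4 * y1 n t $ 1 + sg * cnj (q n t) / 2 * y1 n t $ 2)) (at t)" for n t
    by (rule hvd_eq[OF bounded_linear.has_vector_derivative[OF bounded_linear_vec_nth y1_V[of n t]]])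
       (simp add: Vmat_eq mv2 sg_def algebra_simps)
  have dphi: "((\<lambda>t. y1 n t $ 2) has_vector_derivative
      \<i> * (q n t / 2 * y1 n t $ 1 - lam1 / 4 * y1 n t $ 2)) (at t)" for n t
    by (rule hvd_eq[OF bounded_linear.has_vector_derivative[OF bounded_linear_vec_nth y1_V[of n t]]])
       (simp add: Vmat_eq mv2 sg_def algebra_simps)
  define Br where "Br n t = (cmod (y1 n t $ 1))^2 + \<sigma> * (cmod (y1 n t $ 2))^2" for n t
  have bjBr: "braJket \<sigma> (y1 n t) = complex_of_real (Br n t)" for n t
    unfolding braJket_eq Br_def by (simp only: of_real_add of_real_mult complex_norm_square)
  have bjE: "braJket \<sigma> (y1 n t) = y1 n t $ 1 * cnj (y1 n t $ 1) + sg * (y1 n t $ 2 * cnj (y1 n t $ 2))" for n t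
    unfolding braJket_eq sg_def ..
  have ReBr: "Re (braJket \<sigma> (y1 n t)) = Br n t" for n t unfolding bjBr by simp
  have Br0: "Br n t \<noteq> 0" for n t using nz[of n t] unfolding bjBr by simp
  define Bd where "Bd n t = Im lam1 / 2 * (\<sigma> * (cmod (y1 n t $ 2))^2 - (cmod (y1 n t $ 1))^2)" for n t
  have Br_der: "(Br n has_real_derivative Bd n t) (at t)" for n t
  proof -
    define p where "p = y1 n t $ 1"
    define f where "f = y1 n t $ 2"
    define X where "X = \<i> * (lam1 / 4 * p + sg * cnj (q n t) / 2 * f) * cnj p + p * cnj (\<i> * (lam1 / 4 * p + sg * cnj (q n t) / 2 * f))"
    define Y where "Y = \<i> * (q n t / 2 * p - lam1 / 4 * f) * cnj f + f * cnj (\<i> * (q n t / 2 * p - lam1 / 4 * f))"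
    have d: "((\<lambda>t. (cmod (y1 n t $ 1))^2 + \<sigma> * (cmod (y1 n t $ 2))^2) has_real_derivative Re X + \<sigma> * Re Y) (at t)"
      unfolding X_def Y_def p_def f_def by (intro DERIV_add DERIV_cmult cmod2_deriv dpsi dphi)
    have "X + sg * Y = complex_of_real (Bd n t)"
      unfolding Bd_def X_def Y_def p_def[symmetric] f_def[symmetric]
      by (simp only: of_real_mult of_real_diff of_real_divide complex_norm_square ImL)
         (simp add: sgc sg_def[symmetric] field_simps)
    then have "Re (X + sg * Y) = Bd n t" by simp
    then have "Re X + \<sigma> * Re Y = Bd n t" unfolding sg_def by simp
    then show ?thesis using d unfolding Br_def[abs_def] by simp
  qed
  define dps where "dps n t = \<i> * (lam1 / 4 * y1 n t $ 1 + sg * cnj (q n t) / 2 * y1 n t $ 2)" for n t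
  define dph where "dph n t = \<i> * (q n t / 2 * y1 n t $ 1 - lam1 / 4 * y1 n t $ 2)" for n t
  define X where "X n t = dps n t * cnj (y1 n t $ 1) + y1 n t $ 1 * cnj (dps n t)" for n t
  define Y where "Y n t = dph n t * cnj (y1 n t $ 2) + y1 n t $ 2 * cnj (dph n t)" for n t
  define Bdd where "Bdd n t = Im lam1 / 2 * (\<sigma> * Re (Y n t) - Re (X n t))" for n t
  have Bd_der: "(Bd n has_real_derivative Bdd n t) (at t)" for n t
    unfolding Bd_def[abs_def] Bdd_def X_def Y_def
    by (intro DERIV_cmult DERIV_diff cmod2_deriv dpsi[unfolded dps_def[symmetric]] dphi[unfolded dph_def[symmetric]])
  have partC: "(cmod (q1 n t))\<^sup>2 = (cmod (q n t))\<^sup>2 +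
            4 * \<sigma> * deriv (deriv (\<lambda>t. ln (cmod (braJket \<sigma> (y1 n t) / (cnj lam1 - lam1))))) t" for n t
  proof -
    have cm: "cmod (cnj lam1 - lam1) > 0" using LLc by simp
    have feq: "(\<lambda>t. ln (cmod (braJket \<sigma> (y1 n t) / (cnj lam1 - lam1)))) = (\<lambda>t. ln \<bar>Br n t\<bar> - ln (cmod (cnj lam1 - lam1)))"
    proof
      fix t
      have "cmod (braJket \<sigma> (y1 n t) / (cnj lam1 - lam1)) = \<bar>Br n t\<bar> / cmod (cnj lam1 - lam1)"
        unfolding bjBr by (simp add: norm_divide)
      moreover have "\<bar>Br n t\<bar> > 0" using Br0[of n t] by simp
      ultimately show "ln (cmod (braJket \<sigma> (y1 n t) / (cnj lam1 - lam1))) = ln \<bar>Br n t\<bar> - ln (cmod (cnj lam1 - lam1))"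
        using cm by (simp add: ln_div)
    qed
    have d1: "deriv (\<lambda>t. ln (cmod (braJket \<sigma> (y1 n t) / (cnj lam1 - lam1)))) = (\<lambda>t. Bd n t / Br n t)"
    proof
      fix t
      have "((\<lambda>t. ln \<bar>Br n t\<bar> - ln (cmod (cnj lam1 - lam1))) has_real_derivative Bd n t / Br n t - 0) (at t)"
        by (intro DERIV_diff ln_abs_deriv Br_der Br0 DERIV_const)
      then show "deriv (\<lambda>t. ln (cmod (braJket \<sigma> (y1 n t) / (cnj lam1 - lam1)))) t = Bd n t / Br n t"
        unfolding feq by (simp add: DERIV_imp_deriv)
    qed
    have d2: "deriv (\<lambda>t. Bd n t / Br n t) t = (Bdd n t * Br n t - Bd n t * Bd n t) / (Br n t * Br n t)"
      by (intro DERIV_imp_deriv DERIV_divide Bd_der Br_der Br0)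
    define p where "p = y1 n t $ 1"
    define f where "f = y1 n t $ 2"
    define C where "C = p * cnj p + sg * (f * cnj f)"
    have C0: "C \<noteq> 0" using nz[of n t] unfolding C_def p_def f_def bjE .
    have oBr: "complex_of_real (Br n t) = C" unfolding C_def p_def f_def bjE[symmetric] bjBr ..
    have ReX: "complex_of_real (Re (X n t)) = X n t"
      unfolding X_def by (simp add: complex_eq_iff)
    have ReY: "complex_of_real (Re (Y n t)) = Y n t"
      unfolding Y_def by (simp add: complex_eq_iff)
    define X' where "X' = (lam1 / 4 * p + sg * cnj (q n t) / 2 * f) * cnj p - p * (cnj lam1 / 4 * cnj p + sg * q n t / 2 * cnj f)"
    define Y' where "Y' = (q n t / 2 * p - lam1 / 4 * f) * cnj f - f * (cnj (q n t) / 2 * cnj p - cnj lam1 / 4 * cnj f)"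
    have XX: "X n t = \<i> * X'" unfolding X_def X'_def dps_def p_def f_def by (simp add: sgc algebra_simps)
    have YY: "Y n t = \<i> * Y'" unfolding Y_def Y'_def dph_def p_def f_def by (simp add: sgc algebra_simps)
    have oBdd: "complex_of_real (Bdd n t) = (lam1 - cnj lam1) / 4 * (sg * Y' - X')"
      unfolding Bdd_def apply (simp only: of_real_mult of_real_diff of_real_divide ReX ReY)
      apply (simp only: XX YY ImL sg_def[symmetric]) by (simp add: field_simps)
    have oBd: "complex_of_real (Bd n t) * complex_of_real (Bd n t) = - ((lam1 - cnj lam1)^2 / 16 * (sg * (f * cnj f) - p * cnj p)^2)"
      unfolding Bd_def p_def f_def
      by (simp only: of_real_mult of_real_diff of_real_divide complex_norm_square ImL sg_def[symmetric])
        (simp add: field_simps power2_eq_square)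
    have hQ: "q1 n t = q n t + (cnj lam1 - lam1) * cnj p * f / C"
      unfolding q1_def C_def p_def f_def bjE by (simp add: algebra_simps)
    have hQc: "cnj (q1 n t) = cnj (q n t) - (cnj lam1 - lam1) * p * cnj f / C"
      using C0 unfolding hQ C_def by (simp add: sgc field_simps)
    have key: "q1 n t * cnj (q1 n t) = q n t * cnj (q n t) + 4 * sg * (((lam1 - cnj lam1) / 4 * (sg * Y' - X') * C - - ((lam1 - cnj lam1)^2 / 16 * (sg * (f * cnj f) - p * cnj p)^2)) / (C * C))"
      by (rule C_alg[OF sgv C_def C0 X'_def Y'_def refl refl hQ hQc])
    have "complex_of_real ((cmod (q1 n t))\<^sup>2) = complex_of_real ((cmod (q n t))\<^sup>2 + 4 * \<sigma> * ((Bdd n t * Br n t - Bd n t * Bd n t) / (Br n t * Br n t)))"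
      unfolding complex_norm_square of_real_add of_real_mult of_real_divide of_real_diff oBr oBdd oBd key
      by (simp add: sg_def)
    then show ?thesis unfolding d1 d2 by (simp only: of_real_eq_iff)
  qed
  have partA: "\<forall>(lam::complex) (\<Psi>::int \<Rightarrow> real \<Rightarrow> complex^2).
            lam \<noteq> 0 \<and> lam \<noteq> cnj lam1
            \<and> (\<forall>n s. \<Psi> (n + 1) s = Umat a \<sigma> (\<rho> n s) (q n s) (q (n + 1) s) lam *v \<Psi> n s)
            \<and> (\<forall>n s. (\<Psi> n has_vector_derivative (Vmat \<sigma> (q n s) lam *v \<Psi> n s)) (at s))
          \<longrightarrow> (\<forall>n s.
                Tmat \<sigma> lam1 (y1 (n + 1) s) lam *v \<Psi> (n + 1) s
                  = Umat a \<sigma> (\<rho>1 n s) (q1 n s) (q1 (n + 1) s) lam *v (Tmat \<sigma> lam1 (y1 n s) lam *v \<Psi> n s)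
              \<and> ((\<lambda>t. Tmat \<sigma> lam1 (y1 n t) lam *v \<Psi> n t) has_vector_derivative
                   (Vmat \<sigma> (q1 n s) lam *v (Tmat \<sigma> lam1 (y1 n s) lam *v \<Psi> n s))) (at s))"
  proof (rule allI, rule allI, rule impI)
    fix lam :: complex and \<Psi> :: "int \<Rightarrow> real \<Rightarrow> complex^2"
    assume H: "lam \<noteq> 0 \<and> lam \<noteq> cnj lam1
            \<and> (\<forall>n s. \<Psi> (n + 1) s = Umat a \<sigma> (\<rho> n s) (q n s) (q (n + 1) s) lam *v \<Psi> n s)
            \<and> (\<forall>n s. (\<Psi> n has_vector_derivative (Vmat \<sigma> (q n s) lam *v \<Psi> n s)) (at s))"
    then have l0: "lam \<noteq> 0" and lLc: "lam - cnj lam1 \<noteq> 0"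
      and HU: "\<And>n s. \<Psi> (n + 1) s = Umat a \<sigma> (\<rho> n s) (q n s) (q (n + 1) s) lam *v \<Psi> n s"
      and HV: "\<And>n s. (\<Psi> n has_vector_derivative (Vmat \<sigma> (q n s) lam *v \<Psi> n s)) (at s)"
      by auto
    show "\<forall>n s.
                Tmat \<sigma> lam1 (y1 (n + 1) s) lam *v \<Psi> (n + 1) s
                  = Umat a \<sigma> (\<rho>1 n s) (q1 n s) (q1 (n + 1) s) lam *v (Tmat \<sigma> lam1 (y1 n s) lam *v \<Psi> n s)
              \<and> ((\<lambda>t. Tmat \<sigma> lam1 (y1 n t) lam *v \<Psi> n t) has_vector_derivative
                   (Vmat \<sigma> (q1 n s) lam *v (Tmat \<sigma> lam1 (y1 n s) lam *v \<Psi> n s))) (at s)"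
    proof (intro allI conjI)
      fix n t
      show "Tmat \<sigma> lam1 (y1 (n + 1) t) lam *v \<Psi> (n + 1) t
                  = Umat a \<sigma> (\<rho>1 n t) (q1 n t) (q1 (n + 1) t) lam *v (Tmat \<sigma> lam1 (y1 n t) lam *v \<Psi> n t)"
      proof -
        define p where "p = y1 n t $ 1"
        define f where "f = y1 n t $ 2"
        define p1 where "p1 = y1 (n + 1) t $ 1"
        define f1 where "f1 = y1 (n + 1) t $ 2"
        define k where "k = \<i> * complex_of_real (a * \<rho> n t)"
        define d where "d = q (n + 1) t - q n t"
        define dc where "dc = cnj (q (n + 1) t) - cnj (q n t)"
        have ck: "cnj k = - k" unfolding k_def by simp
        have cdc: "cnj dc = d" unfolding d_def dc_def by simp
        have cd: "cnj d = dc" unfolding d_def dc_def by simp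
        have Ueq: "Umat a \<sigma> (\<rho> n t) (q n t) (q (n + 1) t) l' = Um sg k d dc l'" for l'
          unfolding Umat_eq k_def d_def dc_def sg_def ..
        have yv: "y1 (n + 1) t = vector [(1 - k / lam1) * p + (- sg * dc / lam1) * f, d / lam1 * p + (1 + k / lam1) * f]"
          unfolding y1_U Ueq Um_def mv2 p_def f_def ..
        have yp1: "p1 = (1 - k / lam1) * p + (- sg * dc / lam1) * f" unfolding p1_def yv by simp
        have yf1: "f1 = d / lam1 * p + (1 + k / lam1) * f" unfolding f1_def yv by simp
        define P1 where "P1 = lam1 * p1"
        define F1 where "F1 = lam1 * f1"
        define P1c where "P1c = cnj lam1 * cnj p1"
        define F1c where "F1c = cnj lam1 * cnj f1"
        have hP1: "P1 = (lam1 - k) * p - sg * dc * f" unfolding P1_def yp1 using L0 by (simp add: field_simps)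
        have hF1: "F1 = d * p + (lam1 + k) * f" unfolding F1_def yf1 using L0 by (simp add: field_simps)
        have hP1c: "P1c = (cnj lam1 + k) * cnj p - sg * d * cnj f" unfolding P1c_def yp1 using Lc0
          by (simp add: ck cdc sgc field_simps)
        have hF1c: "F1c = dc * cnj p + (cnj lam1 - k) * cnj f" unfolding F1c_def yf1 using Lc0
          by (simp add: ck cd sgc field_simps)
        define b1 where "b1 = braJket \<sigma> (y1 (n + 1) t)"
        define C where "C = p * cnj p + sg * (f * cnj f)"
        have b1E: "b1 = p1 * cnj p1 + sg * (f1 * cnj f1)" unfolding b1_def bjE p1_def f1_def ..
        have CE: "braJket \<sigma> (y1 n t) = C" unfolding C_def bjE p_def f_def ..
        have b10: "b1 \<noteq> 0" unfolding b1_def by (rule nz)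
        have C0: "C \<noteq> 0" using nz[of n t] unfolding CE .
        have Beq: "P1 * P1c + sg * (F1 * F1c) = (lam1 * cnj lam1) * b1"
          unfolding b1E P1_def P1c_def F1_def F1c_def by (simp add: algebra_simps)
        have B0: "P1 * P1c + sg * (F1 * F1c) \<noteq> 0" unfolding Beq using L0 Lc0 b10 by simp
        have LL: "lam1 * cnj lam1 \<noteq> 0" using L0 Lc0 by simp
        have sc1: "P1 * P1c / (P1 * P1c + sg * (F1 * F1c)) = p1 * cnj p1 / b1"
          unfolding Beq unfolding P1_def P1c_def using LL b10 by (simp add: field_simps)
        have sc2: "P1c * F1 / (P1 * P1c + sg * (F1 * F1c)) = cnj p1 * f1 / b1"
          unfolding Beq unfolding F1_def P1c_def using LL b10 by (simp add: field_simps)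
        have sc3: "P1 * F1c / (P1 * P1c + sg * (F1 * F1c)) = p1 * cnj f1 / b1"
          unfolding Beq unfolding P1_def F1c_def using LL b10 by (simp add: field_simps)
        note DM = disc_mat[OF sgv hP1 hF1 hP1c hF1c l0 lLc B0 C0[unfolded C_def]]
        have T1: "Tmat \<sigma> lam1 (y1 (n + 1) t) lam = Tm sg ((cnj lam1 - lam1) / (lam - cnj lam1)) P1 P1c F1 F1c"
          unfolding Tmat_eq P1_def P1c_def F1_def F1c_def p1_def f1_def sg_def[symmetric]
          by (rule Tm_scale[OF L0 Lc0])
        have T0: "Tmat \<sigma> lam1 (y1 n t) lam = Tm sg ((cnj lam1 - lam1) / (lam - cnj lam1)) p (cnj p) f (cnj f)"
          unfolding Tmat_eq p_def f_def sg_def ..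
        have cb1: "cnj b1 = b1" unfolding b1_def bjBr by simp
        have cC: "cnj C = C" unfolding CE[symmetric] bjBr by simp
        have q1n: "q1 n t = q n t + (cnj lam1 - lam1) * cnj p * f / C"
          unfolding q1_def CE p_def f_def ..
        have q1n1: "q1 (n + 1) t = q (n + 1) t + (cnj lam1 - lam1) * cnj p1 * f1 / b1"
          unfolding q1_def b1_def p1_def f1_def ..
        have eD: "q1 (n + 1) t - q1 n t = d + (cnj lam1 - lam1) * (P1c * F1 / (P1 * P1c + sg * (F1 * F1c)) - cnj p * f / (p * cnj p + sg * (f * cnj f)))"
          unfolding sc2 C_def[symmetric] q1n q1n1 d_def by (simp add: algebra_simps)
        have eDc: "cnj (q1 (n + 1) t) - cnj (q1 n t) = dc - (cnj lam1 - lam1) * (P1 * F1c / (P1 * P1c + sg * (F1 * F1c)) - p * cnj f / (p * cnj p + sg * (f * cnj f)))"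
          unfolding sc3 C_def[symmetric] q1n q1n1 dc_def using b10 C0 cb1 cC by (simp add: field_simps)
        have eK: "\<i> * complex_of_real (a * \<rho>1 n t) = k - (cnj lam1 - lam1) * (P1 * P1c / (P1 * P1c + sg * (F1 * F1c)) - p * cnj p / (p * cnj p + sg * (f * cnj f)))"
        proof -
          have feq: "(\<lambda>t. ln \<bar>Re (braJket \<sigma> (y1 (n + 1) t)) / Re (braJket \<sigma> (y1 n t))\<bar>) = (\<lambda>t. ln \<bar>Br (n + 1) t\<bar> - ln \<bar>Br n t\<bar>)"
          proof
            fix t
            have "\<bar>Br (n + 1) t\<bar> > 0" "\<bar>Br n t\<bar> > 0" using Br0[of "n + 1" t] Br0[of n t] by auto
            then show "ln \<bar>Re (braJket \<sigma> (y1 (n + 1) t)) / Re (braJket \<sigma> (y1 n t))\<bar> = ln \<bar>Br (n + 1) t\<bar> - ln \<bar>Br n t\<bar>"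
              unfolding ReBr abs_divide by (simp add: ln_div)
          qed
          have "((\<lambda>t. ln \<bar>Br (n + 1) t\<bar> - ln \<bar>Br n t\<bar>) has_real_derivative Bd (n + 1) t / Br (n + 1) t - Bd n t / Br n t) (at t)"
            by (intro DERIV_diff ln_abs_deriv Br_der Br0)
          then have der: "deriv (\<lambda>t. ln \<bar>Re (braJket \<sigma> (y1 (n + 1) t)) / Re (braJket \<sigma> (y1 n t))\<bar>) t = Bd (n + 1) t / Br (n + 1) t - Bd n t / Br n t"
            unfolding feq by (rule DERIV_imp_deriv)
          have "a * \<rho>1 n t = a * \<rho> n t - (2 * (Bd (n + 1) t / Br (n + 1) t) - 2 * (Bd n t / Br n t))"
            unfolding rho1_def der using a_pos by (simp add: field_simps)
          note r = this
          have "\<i> * complex_of_real (a * \<rho>1 n t) = k - (\<i> * complex_of_real (2 * (Bd (n + 1) t / Br (n + 1) t)) - \<i> * complex_of_real (2 * (Bd n t / Br n t)))"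
            unfolding k_def r of_real_diff by (simp only: algebra_simps)
          also have "\<i> * complex_of_real (2 * (Bd (n + 1) t / Br (n + 1) t)) = - (cnj lam1 - lam1) / 2 + (cnj lam1 - lam1) * (p1 * cnj p1) / b1"
            unfolding Bd_def Br_def b1E p1_def f1_def by (rule iBd[OF sg_def Br0[unfolded Br_def]])
          also have "\<i> * complex_of_real (2 * (Bd n t / Br n t)) = - (cnj lam1 - lam1) / 2 + (cnj lam1 - lam1) * (p * cnj p) / C"
            unfolding Bd_def Br_def C_def p_def f_def by (rule iBd[OF sg_def Br0[unfolded Br_def]])
          also have "k - ((- (cnj lam1 - lam1) / 2 + (cnj lam1 - lam1) * (p1 * cnj p1) / b1) - (- (cnj lam1 - lam1) / 2 + (cnj lam1 - lam1) * (p * cnj p) / C))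
              = k - (cnj lam1 - lam1) * (p1 * cnj p1 / b1 - p * cnj p / C)"
            using b10 C0 by (simp add: field_simps)
          finally show ?thesis unfolding sc1 C_def[symmetric] .
        qed
        have U1: "Umat a \<sigma> (\<rho>1 n t) (q1 n t) (q1 (n + 1) t) lam = Um sg (k - (cnj lam1 - lam1) * (P1 * P1c / (P1 * P1c + sg * (F1 * F1c)) - p * cnj p / (p * cnj p + sg * (f * cnj f))))
           (d + (cnj lam1 - lam1) * (P1c * F1 / (P1 * P1c + sg * (F1 * F1c)) - cnj p * f / (p * cnj p + sg * (f * cnj f))))
           (dc - (cnj lam1 - lam1) * (P1 * F1c / (P1 * P1c + sg * (F1 * F1c)) - p * cnj f / (p * cnj p + sg * (f * cnj f)))) lam"
          unfolding Umat_eq eK eD eDc sg_def ..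
        show ?thesis unfolding HU[of n t] Ueq T1 T0 U1 matrix_vector_mul_assoc DM ..
      qed
      show "((\<lambda>t. Tmat \<sigma> lam1 (y1 n t) lam *v \<Psi> n t) has_vector_derivative
                   (Vmat \<sigma> (q1 n t) lam *v (Tmat \<sigma> lam1 (y1 n t) lam *v \<Psi> n t))) (at t)"
      proof -
        define c where "c = (cnj lam1 - lam1) / (lam - cnj lam1)"
        define ps where "ps t' = y1 n t' $ 1" for t'
        define ph where "ph t' = y1 n t' $ 2" for t'
        define psc where "psc t' = cnj (ps t')" for t'
        define phc where "phc t' = cnj (ph t')" for t'
        define x1 where "x1 t' = \<Psi> n t' $ 1" for t'
        define x2 where "x2 t' = \<Psi> n t' $ 2" for t'
        define Cf where "Cf t' = ps t' * psc t' + sg * (ph t' * phc t')" for t'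
        define Dp where "Dp = lam1 / 4 * ps t + sg * cnj (q n t) / 2 * ph t"
        define Df where "Df = q n t / 2 * ps t - lam1 / 4 * ph t"
        define Dpc where "Dpc = - (cnj lam1 / 4 * psc t + sg * q n t / 2 * phc t)"
        define Dfc where "Dfc = - (cnj (q n t) / 2 * psc t - cnj lam1 / 4 * phc t)"
        define Cd where "Cd = Dp * psc t + ps t * Dpc + sg * (Df * phc t + ph t * Dfc)"
        have hps: "(ps has_vector_derivative \<i> * Dp) (at t)"
          unfolding ps_def[abs_def] Dp_def ps_def ph_def using dpsi[of n t] by simp
        have hph: "(ph has_vector_derivative \<i> * Df) (at t)"
          unfolding ph_def[abs_def] Df_def ph_def ps_def using dphi[of n t] by simp
        have hpsc: "(psc has_vector_derivative \<i> * Dpc) (at t)"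
          unfolding psc_def[abs_def]
          by (rule hvd_eq[OF has_vector_derivative_cnj[OF hps]]) (simp add: Dp_def Dpc_def psc_def phc_def sgc algebra_simps)
        have hphc: "(phc has_vector_derivative \<i> * Dfc) (at t)"
          unfolding phc_def[abs_def]
          by (rule hvd_eq[OF has_vector_derivative_cnj[OF hph]]) (simp add: Df_def Dfc_def phc_def psc_def sgc algebra_simps)
        have hCf: "(Cf has_vector_derivative \<i> * Cd) (at t)"
        proof -
          have "((\<lambda>t'. ps t' * psc t' + sg * (ph t' * phc t')) has_vector_derivative
              (ps t * (\<i> * Dpc) + (\<i> * Dp) * psc t + sg * (ph t * (\<i> * Dfc) + (\<i> * Df) * phc t))) (at t)"
            by (intro has_vector_derivative_add has_vector_derivative_mult has_vector_derivative_mult_right hps hph hpsc hphc)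
          then show ?thesis unfolding Cf_def[abs_def] by (rule hvd_eq) (simp add: Cd_def algebra_simps)
        qed
        have C0: "Cf t \<noteq> 0" using nz[of n t] unfolding Cf_def bjE ps_def ph_def psc_def phc_def .
        have hx1: "(x1 has_vector_derivative \<i> * (lam / 4) * x1 t + \<i> * (sg * cnj (q n t) / 2) * x2 t) (at t)"
          unfolding x1_def[abs_def]
          by (rule hvd_eq[OF bounded_linear.has_vector_derivative[OF bounded_linear_vec_nth HV[of n t]]])
             (simp add: Vmat_eq mv2 x1_def x2_def sg_def)
        have hx2: "(x2 has_vector_derivative \<i> * (q n t / 2) * x1 t + \<i> * (- (lam / 4)) * x2 t) (at t)"
          unfolding x2_def[abs_def]
          by (rule hvd_eq[OF bounded_linear.has_vector_derivative[OF bounded_linear_vec_nth HV[of n t]]])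
             (simp add: Vmat_eq mv2 x1_def x2_def sg_def)
        have hc: "c * (lam - cnj lam1) = cnj lam1 - lam1" using lLc unfolding c_def by simp
        have CfE: "Cf t = braJket \<sigma> (y1 n t)" unfolding Cf_def bjE ps_def ph_def psc_def phc_def ..
        have cCf: "cnj (Cf t) = Cf t" unfolding CfE bjBr by simp
        have hQ: "q1 n t = q n t + (cnj lam1 - lam1) * psc t * ph t / Cf t"
          unfolding q1_def CfE psc_def ps_def ph_def ..
        have hQc: "cnj (q1 n t) = cnj (q n t) - (cnj lam1 - lam1) * ps t * phc t / Cf t"
          unfolding hQ using C0 cCf by (simp add: psc_def phc_def field_simps)
        note E = V_entries[OF sgv Cf_def C0 Dp_def Df_def Dpc_def Dfc_def Cd_def hc hQ hQc]
        have d11: "((\<lambda>t'. 1 + c * (ps t' * psc t') / Cf t') has_vector_derivative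
            \<i> * (c * (((Dp * psc t + ps t * Dpc) * Cf t - (ps t * psc t) * Cd) / (Cf t)^2))) (at t)"
          by (intro hvd_one_plus ent_der hps hpsc hCf C0)
        have d12: "((\<lambda>t'. c * (ps t' * phc t' * sg) / Cf t') has_vector_derivative
            \<i> * (c * ((((Dp * phc t + ps t * Dfc) * sg) * Cf t - (ps t * phc t * sg) * Cd) / (Cf t)^2))) (at t)"
          by (intro ent_der_e hps hphc hCf C0)
        have d21: "((\<lambda>t'. c * (ph t' * psc t') / Cf t') has_vector_derivative
            \<i> * (c * (((Df * psc t + ph t * Dpc) * Cf t - (ph t * psc t) * Cd) / (Cf t)^2))) (at t)"
          by (intro ent_der hph hpsc hCf C0)
        have d22: "((\<lambda>t'. 1 + c * (ph t' * phc t' * sg) / Cf t') has_vector_derivative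
            \<i> * (c * ((((Df * phc t + ph t * Dfc) * sg) * Cf t - (ph t * phc t * sg) * Cd) / (Cf t)^2))) (at t)"
          by (intro hvd_one_plus ent_der_e hph hphc hCf C0)
        have feq: "(\<lambda>t'. Tmat \<sigma> lam1 (y1 n t') lam *v \<Psi> n t') = (\<lambda>t'. vector
           [(1 + c * (ps t' * psc t') / Cf t') * x1 t' + (c * (ps t' * phc t' * sg) / Cf t') * x2 t',
            (c * (ph t' * psc t') / Cf t') * x1 t' + (1 + c * (ph t' * phc t' * sg) / Cf t') * x2 t'])"
          unfolding Tmat_eq Tm_def mv2 c_def[symmetric] sg_def[symmetric] ps_def[symmetric] ph_def[symmetric]
            x1_def[symmetric] x2_def[symmetric]
          unfolding psc_def[symmetric] phc_def[symmetric]
          unfolding Cf_def[symmetric] ..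
        have tgt: "Vmat \<sigma> (q1 n t) lam *v (Tmat \<sigma> lam1 (y1 n t) lam *v \<Psi> n t) = vector
           [(\<i> * (lam / 4)) * ((1 + c * (ps t * psc t) / Cf t) * x1 t + (c * (ps t * phc t * sg) / Cf t) * x2 t)
             + (\<i> * (sg * cnj (q1 n t) / 2)) * ((c * (ph t * psc t) / Cf t) * x1 t + (1 + c * (ph t * phc t * sg) / Cf t) * x2 t),
            (\<i> * (q1 n t / 2)) * ((1 + c * (ps t * psc t) / Cf t) * x1 t + (c * (ps t * phc t * sg) / Cf t) * x2 t)
             + (\<i> * (- (lam / 4))) * ((c * (ph t * psc t) / Cf t) * x1 t + (1 + c * (ph t * phc t * sg) / Cf t) * x2 t)]"
          unfolding Vmat_eq Tmat_eq Tm_def mv2 vec2_nth c_def[symmetric] sg_def[symmetric] ps_def[symmetric] ph_def[symmetric]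
            x1_def[symmetric] x2_def[symmetric]
          unfolding psc_def[symmetric] phc_def[symmetric]
          unfolding Cf_def[symmetric] ..
        show ?thesis unfolding feq tgt
        proof (rule hvd_vec2)
          show "((\<lambda>t'. (vector
           [(1 + c * (ps t' * psc t') / Cf t') * x1 t' + (c * (ps t' * phc t' * sg) / Cf t') * x2 t',
            (c * (ph t' * psc t') / Cf t') * x1 t' + (1 + c * (ph t' * phc t' * sg) / Cf t') * x2 t'] :: complex^2) $ 1)
            has_vector_derivative (vector
           [(\<i> * (lam / 4)) * ((1 + c * (ps t * psc t) / Cf t) * x1 t + (c * (ps t * phc t * sg) / Cf t) * x2 t)
             + (\<i> * (sg * cnj (q1 n t) / 2)) * ((c * (ph t * psc t) / Cf t) * x1 t + (1 + c * (ph t * phc t * sg) / Cf t) * x2 t),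
            (\<i> * (q1 n t / 2)) * ((1 + c * (ps t * psc t) / Cf t) * x1 t + (c * (ps t * phc t * sg) / Cf t) * x2 t)
             + (\<i> * (- (lam / 4))) * ((c * (ph t * psc t) / Cf t) * x1 t + (1 + c * (ph t * phc t * sg) / Cf t) * x2 t)] :: complex^2) $ 1) (at t)"
            unfolding vec2_nth
            by (rule hvd_eq[OF has_vector_derivative_add[OF has_vector_derivative_mult[OF d11 hx1] has_vector_derivative_mult[OF d12 hx2]]])
               (rule combine[OF refl refl E(1) E(2)])
          show "((\<lambda>t'. (vector
           [(1 + c * (ps t' * psc t') / Cf t') * x1 t' + (c * (ps t' * phc t' * sg) / Cf t') * x2 t',
            (c * (ph t' * psc t') / Cf t') * x1 t' + (1 + c * (ph t' * phc t' * sg) / Cf t') * x2 t'] :: complex^2) $ 2)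
            has_vector_derivative (vector
           [(\<i> * (lam / 4)) * ((1 + c * (ps t * psc t) / Cf t) * x1 t + (c * (ps t * phc t * sg) / Cf t) * x2 t)
             + (\<i> * (sg * cnj (q1 n t) / 2)) * ((c * (ph t * psc t) / Cf t) * x1 t + (1 + c * (ph t * phc t * sg) / Cf t) * x2 t),
            (\<i> * (q1 n t / 2)) * ((1 + c * (ps t * psc t) / Cf t) * x1 t + (c * (ps t * phc t * sg) / Cf t) * x2 t)
             + (\<i> * (- (lam / 4))) * ((c * (ph t * psc t) / Cf t) * x1 t + (1 + c * (ph t * phc t * sg) / Cf t) * x2 t)] :: complex^2) $ 2) (at t)"
            unfolding vec2_nth
            by (rule hvd_eq[OF has_vector_derivative_add[OF has_vector_derivative_mult[OF d21 hx1] has_vector_derivative_mult[OF d22 hx2]]])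
               (rule combine[OF refl refl E(3) E(4)])
        qed
      qed
    qed
  qed
  show ?thesis using partA partC by blast
qed

end
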